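(* Under the setting and hypotheses of the convergence theorem stated in the context (existence of a valid solution $\boldsymbol{x}^\star$ and priors satisfying $1\ge q_v>1-\epsilon_v$ if $\mathtt{x}^\star_v=0$, $0\le q_v<\epsilon_v$ if $\mathtt{x}^\star_v=1$), the variable-to-factor messages after the first BP iteration satisfy $$\mathsf{m}^{(1)}_{v\to J}(\mathtt{x}^\star_v)>\mathsf{m}^{(1)}_{v\to J}(1-\mathtt{x}^\star_v)\quad\text{for all } v\in\mathcal{V},\ J\in\mathcal{J}_v.$$
   Context: Factor graph: a finite set $\mathcal{V}$ of binary variables $x_v\in\{0,1\}$ and a finite set $\mathcal{J}$ of factors; each factor $J$ has a nonempty neighborhood $\mathcal{V}_J\subseteq\mathcal{V}$ and a function $\mathsf{g}_J:\{0,1\}^{|\mathcal{V}_J|}\to\{0,1\}$. For $v\in\mathcal{V}$, $\mathcal{J}_v=\{J: v\in\mathcal{V}_J\}$, assumed nonempty. A valid solution is $\boldsymbol{x}^\star\in\{0,1\}^{\mathcal{V}}$ with $\mathsf{g}_J(\boldsymbol{x}^\star_{\mathcal{V}_J})=1$ for all $J$. Define $\kappa_v=\max_{J\in\mathcal{J}_v}|\{\mathbf{x}_{\mathcal{V}_J}:\mathsf{g}_J(\mathbf{x}_{\mathcal{V}_J})=1\}|$ and $\epsilon_v=1/(1+\kappa_v^{|\mathcal{J}_v|})$. BP: priors $\mathrm{P}_v(0)=q_v$, $\mathrm{P}_v(1)=1-q_v$; $\mathsf{m}^{(0)}_{v\to J}(0)=q_v$, $\mathsf{m}^{(0)}_{v\to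 J}(1)=1-q_v$; for $n\ge1$, $\mathsf{m}^{(n)}_{J\to v}(x)=\mathtt{C}^{(n)}_{J\to v}\sum_{\mathbf{x}_{\mathcal{V}_J\setminus v}}\mathsf{g}_J(\mathbf{x}_{\mathcal{V}_J\setminus v},x_v=x)\prod_{y\in\mathcal{V}_J\setminus v}\mathsf{m}^{(n-1)}_{y\to J}(x_y)$ and $\mathsf{m}^{(n)}_{v\to J}(x)=\mathtt{C}^{(n)}_{v\to J}\mathrm{P}_v(x)\prod_{I\in\mathcal{J}_v\setminus J}\mathsf{m}^{(n)}_{I\to v}(x)$, with positive normalizing constants making $\mathsf{m}(0)+\mathsf{m}(1)=1$. *)

theory Defs
  imports Complex_Main "HOL-Library.FuncSet"
begin

text \<open>Factor graph: variable set V (type 'v), factor set F (type 'j),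
  neighbourhood N J, factor functions g J acting on local configurations.\<close>

definition loc_configs :: "'v set \<Rightarrow> ('v \<Rightarrow> nat) set" where
  "loc_configs S = PiE S (\<lambda>_. {0, 1})"

definition Jv :: "'j set \<Rightarrow> ('j \<Rightarrow> 'v set) \<Rightarrow> 'v \<Rightarrow> 'j set" where
  "Jv F N v = {J \<in> F. v \<in> N J}"

definition kappa :: "'j set \<Rightarrow> ('j \<Rightarrow> 'v set) \<Rightarrow> ('j \<Rightarrow> ('v \<Rightarrow> nat) \<Rightarrow> bool) \<Rightarrow> 'v \<Rightarrow> nat" where
  "kappa F N g v = Max ((\<lambda>J. card {x \<in> loc_configs (N J). g J x}) ` Jv F N v)"

definition eps :: "'j set \<Rightarrow> ('j \<Rightarrow> 'v set) \<Rightarrow> ('j \<Rightarrow> ('v \<Rightarrow> nat) \<Rightarrow> bool) \<Rightarrow> 'v \<Rightarrow> real" where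
  "eps F N g v = 1 / (1 + real (kappa F N g v) ^ card (Jv F N v))"

definition prior :: "('v \<Rightarrow> real) \<Rightarrow> 'v \<Rightarrow> nat \<Rightarrow> real" where
  "prior q v x = (if x = 0 then q v else 1 - q v)"

definition normalize2 :: "(nat \<Rightarrow> real) \<Rightarrow> nat \<Rightarrow> real" where
  "normalize2 f x = f x / (f 0 + f 1)"

definition msg_f2v :: "('j \<Rightarrow> 'v set) \<Rightarrow> ('j \<Rightarrow> ('v \<Rightarrow> nat) \<Rightarrow> bool)
    \<Rightarrow> ('v \<Rightarrow> 'j \<Rightarrow> nat \<Rightarrow> real) \<Rightarrow> 'j \<Rightarrow> 'v \<Rightarrow> nat \<Rightarrow> real" where
  "msg_f2v N g m J v = normalize2 (\<lambda>x.
     \<Sum>y\<in>loc_configs (N J - {v}).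
        (if g J (y(v := x)) then 1 else 0) * (\<Prod>u\<in>N J - {v}. m u J (y u)))"

definition msg_v2f :: "'j set \<Rightarrow> ('j \<Rightarrow> 'v set) \<Rightarrow> ('v \<Rightarrow> real)
    \<Rightarrow> ('j \<Rightarrow> 'v \<Rightarrow> nat \<Rightarrow> real) \<Rightarrow> 'v \<Rightarrow> 'j \<Rightarrow> nat \<Rightarrow> real" where
  "msg_v2f F N q mf v J = normalize2 (\<lambda>x.
     prior q v x * (\<Prod>I\<in>Jv F N v - {J}. mf I v x))"

fun bp_v2f :: "'j set \<Rightarrow> ('j \<Rightarrow> 'v set) \<Rightarrow> ('j \<Rightarrow> ('v \<Rightarrow> nat) \<Rightarrow> bool) \<Rightarrow> ('v \<Rightarrow> real)
    \<Rightarrow> nat \<Rightarrow> 'v \<Rightarrow> 'j \<Rightarrow> nat \<Rightarrow> real" where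
  "bp_v2f F N g q 0 = (\<lambda>v J. prior q v)"
| "bp_v2f F N g q (Suc n) =
     msg_v2f F N q (msg_f2v N g (bp_v2f F N g q n))"

end

theory Submission
  imports Defs
begin

lemma lc_finite: "finite S \<Longrightarrow> finite (loc_configs S)"
  unfolding loc_configs_def by (intro finite_PiE) auto

lemma lc_upd: "y \<in> loc_configs (S - {v}) \<Longrightarrow> v \<in> S \<Longrightarrow> x \<in> {0,1}
   \<Longrightarrow> y(v:=x) \<in> loc_configs S"
  unfolding loc_configs_def PiE_def Pi_def extensional_def by auto

lemma lc_inj: "inj_on (\<lambda>y. y(v:=x)) (loc_configs (S - {v}))"
proof (rule inj_onI)
  fix y z assume y: "y \<in> loc_configs (S - {v})" and z: "z \<in> loc_configs (S - {v})"
    and e: "y(v:=x) = z(v:=x)"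
  have "y v = undefined" "z v = undefined" using y z
    unfolding loc_configs_def PiE_def extensional_def by auto
  then show "y = z" using e by (metis fun_upd_triv fun_upd_upd)
qed

lemma lc_count:
  assumes "finite S" "v \<in> S"
  shows "card {y\<in>loc_configs (S-{v}). P (y(v:=0))} + card {y\<in>loc_configs (S-{v}). P (y(v:=1))}
     \<le> card {x\<in>loc_configs S. P x}"
proof -
  let ?T0 = "{y\<in>loc_configs (S-{v}). P (y(v:=0))}"
  let ?T1 = "{y\<in>loc_configs (S-{v}). P (y(v:=1))}"
  have f: "finite (loc_configs (S - {v}))" using assms lc_finite by auto
  have c0: "card ((\<lambda>y. y(v:=0)) ` ?T0) = card ?T0"
    by (rule card_image) (rule inj_on_subset[OF lc_inj], auto)
  have c1: "card ((\<lambda>y. y(v:=1)) ` ?T1) = card ?T1"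
    by (rule card_image) (rule inj_on_subset[OF lc_inj], auto)
  have d: "(\<lambda>y. y(v:=0)) ` ?T0 \<inter> (\<lambda>y. y(v:=1)) ` ?T1 = {}"
  proof (rule equals0I)
    fix z assume "z \<in> (\<lambda>y. y(v:=0)) ` ?T0 \<inter> (\<lambda>y. y(v:=1)) ` ?T1"
    then obtain y y' where a: "z = y(v:=0)" and b: "z = y'(v:=1)" by blast
    have "z v = 0" using a by simp
    moreover have "z v = 1" using b by simp
    ultimately show False by simp
  qed
  have sub: "(\<lambda>y. y(v:=0)) ` ?T0 \<union> (\<lambda>y. y(v:=1)) ` ?T1 \<subseteq> {x\<in>loc_configs S. P x}"
  proof (rule subsetI)
    fix z assume "z \<in> (\<lambda>y. y(v:=0)) ` ?T0 \<union> (\<lambda>y. y(v:=1)) ` ?T1"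
    then consider y where "y \<in> ?T0" "z = y(v:=0)" | y where "y \<in> ?T1" "z = y(v:=1)"
      by blast
    then show "z \<in> {x\<in>loc_configs S. P x}"
    proof cases
      case 1
      then have "y \<in> loc_configs (S-{v})" "P (y(v:=0))" by auto
      then show ?thesis using 1(2) lc_upd[OF _ assms(2), of y 0] by simp
    next
      case 2
      then have "y \<in> loc_configs (S-{v})" "P (y(v:=1))" by auto
      then show ?thesis using 2(2) lc_upd[OF _ assms(2), of y 1] by simp
    qed
  qed
  have fs: "finite {x\<in>loc_configs S. P x}" using lc_finite[OF assms(1)] by simp
  have f0: "finite ((\<lambda>y. y(v:=0)) ` ?T0)" using f by simp
  have f1: "finite ((\<lambda>y. y(v:=1)) ` ?T1)" using f by simp
  have "card ?T0 + card ?T1 = card ((\<lambda>y. y(v:=0)) ` ?T0 \<union> (\<lambda>y. y(v:=1)) ` ?T1)"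
    unfolding card_Un_disjoint[OF f0 f1 d] c0 c1 ..
  also have "\<dots> \<le> card {x\<in>loc_configs S. P x}" using card_mono[OF fs sub] .
  finally show ?thesis .
qed

lemma sum_bound:
  fixes w :: "'a \<Rightarrow> real"
  assumes "finite A" "\<forall>y\<in>A. w y \<le> c" "\<forall>y\<in>A. 0 \<le> w y"
  shows "(\<Sum>y\<in>A. (if P y then 1 else 0) * w y) \<le> real (card {y\<in>A. P y}) * c"
proof -
  have "(\<Sum>y\<in>A. (if P y then 1 else 0) * w y) \<le> (\<Sum>y\<in>A. (if P y then c else 0))"
    using assms by (intro sum_mono) auto
  also have "\<dots> = real (card {y\<in>A. P y}) * c"
    using assms(1) by (simp add: sum.If_cases Int_def)
  finally show ?thesis .
qed

lemma f2v_bound: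
  fixes q :: "'v \<Rightarrow> real" and k :: nat
  assumes fin: "finite (N I)" and vI: "v \<in> N I"
    and sat: "g I (restrict xstar (N I))"
    and xs: "\<forall>u\<in>N I. xstar u \<in> {0,1}"
    and nn: "\<forall>u\<in>N I. \<forall>x\<in>{0,1}. 0 \<le> prior q u x \<and> prior q u x \<le> prior q u (xstar u)"
    and pos: "\<forall>u\<in>N I. 0 < prior q u (xstar u)"
    and hk: "card {x\<in>loc_configs (N I). g I x} \<le> k"
  shows "1 / real k \<le> msg_f2v N g (\<lambda>u J. prior q u) I v (xstar v)
     \<and> 0 \<le> msg_f2v N g (\<lambda>u J. prior q u) I v (1 - xstar v)
     \<and> msg_f2v N g (\<lambda>u J. prior q u) I v (1 - xstar v) \<le> 1"
proof -
  define L where "L = loc_configs (N I - {v})"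
  define w where "w y = (\<Prod>u\<in>N I - {v}. prior q u (y u))" for y
  define S where "S x = (\<Sum>y\<in>L. (if g I (y(v:=x)) then 1 else 0) * w y)" for x
  have m: "msg_f2v N g (\<lambda>u J. prior q u) I v x = S x / (S 0 + S 1)" for x
    unfolding msg_f2v_def normalize2_def S_def w_def L_def by simp
  have finL: "finite L" unfolding L_def using fin by (simp add: lc_finite)
  define ys where "ys = restrict xstar (N I - {v})"
  have ysL: "ys \<in> L" unfolding L_def loc_configs_def ys_def using xs by (auto simp: PiE_iff)
  have yv: "y u \<in> {0,1}" if "y \<in> L" "u \<in> N I - {v}" for y u
    using that unfolding L_def loc_configs_def by (auto simp: PiE_iff)
  have wle: "\<forall>y\<in>L. w y \<le> w ys"
  proof
    fix y assume y: "y \<in> L"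
    show "w y \<le> w ys" unfolding w_def
    proof (rule prod_mono)
      fix u assume u: "u \<in> N I - {v}"
      have "ys u = xstar u" using u unfolding ys_def by simp
      then show "0 \<le> prior q u (y u) \<and> prior q u (y u) \<le> prior q u (ys u)"
        using nn yv[OF y u] u by auto
    qed
  qed
  have wnn: "\<forall>y\<in>L. 0 \<le> w y"
  proof
    fix y assume y: "y \<in> L"
    show "0 \<le> w y" unfolding w_def
    proof (rule prod_nonneg)
      fix u assume u: "u \<in> N I - {v}"
      show "0 \<le> prior q u (y u)" using nn yv[OF y u] u by auto
    qed
  qed
  have wpos: "0 < w ys" unfolding w_def ys_def using pos by (auto intro!: prod_pos)
  have gys: "g I (ys(v := xstar v))"
  proof -
    have "ys(v := xstar v) = restrict xstar (N I)" unfolding ys_def using vI by (auto simp: fun_eq_iff)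
    then show ?thesis using sat by simp
  qed
  have Snn: "0 \<le> S x" for x unfolding S_def using wnn by (auto intro!: sum_nonneg)
  have Sxs: "w ys \<le> S (xstar v)"
  proof -
    have "(if g I (ys(v:=xstar v)) then 1 else 0) * w ys \<le> S (xstar v)"
      unfolding S_def using wnn finL ysL by (intro member_le_sum) auto
    then show ?thesis using gys by simp
  qed
  have Sb: "S x \<le> real (card {y\<in>L. g I (y(v:=x))}) * w ys" for x
    unfolding S_def using sum_bound[OF finL wle wnn] .
  have cnt: "card {y\<in>L. g I (y(v:=0))} + card {y\<in>L. g I (y(v:=1))} \<le> k"
    using lc_count[OF fin vI, of "g I"] hk unfolding L_def by linarith
  have "S 0 + S 1 \<le> real (card {y\<in>L. g I (y(v:=0))} + card {y\<in>L. g I (y(v:=1))}) * w ys"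
    using Sb[of 0] Sb[of 1] by (simp add: algebra_simps)
  also have "\<dots> \<le> real k * w ys" using cnt wpos
    by (intro mult_right_mono) auto
  finally have D: "S 0 + S 1 \<le> real k * w ys" .
  have xv: "xstar v \<in> {0,1}" using xs vI by auto
  have Dpos: "0 < S 0 + S 1" using Sxs wpos Snn[of 0] Snn[of 1] xv by (cases "xstar v = 0") auto
  have kpos: "0 < real k" using D Dpos wpos by (smt (verit) mult_nonpos_nonneg of_nat_0_le_iff)
  have D2: "S 0 + S 1 \<le> real k * S (xstar v)"
    using D Sxs kpos by (meson mult_left_mono less_imp_le order_trans)
  have "1 / real k \<le> S (xstar v) / (S 0 + S 1)"
    using D2 kpos Dpos by (simp add: divide_simps mult.commute)
  moreover have "0 \<le> S (1 - xstar v) / (S 0 + S 1)" using Snn Dpos by simp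
  moreover have "S (1 - xstar v) / (S 0 + S 1) \<le> 1"
    using Snn[of 0] Snn[of 1] Dpos xv by (cases "xstar v = 0") auto
  ultimately show ?thesis unfolding m by simp
qed

lemma key_ineq:
  fixes K e c :: real and m n :: nat
  assumes K: "1 \<le> K" and mn: "m \<le> n" and e: "e = 1 / (1 + K ^ n)"
  shows "e \<le> (1 - e) * (1 / K) ^ m"
proof -
  have Km: "K ^ m \<le> K ^ n" using power_increasing[OF mn K] .
  have Kmp: "0 < K ^ m" using K by simp
  have Knp: "0 < K ^ n" using K by simp
  have h: "1 - e = K ^ n / (1 + K ^ n)" using e Knp by (simp add: field_simps)
  have eq: "(1 - e) * (1 / K) ^ m = (K ^ n / K ^ m) / (1 + K ^ n)"
    unfolding h using Kmp Knp by (simp add: power_one_over field_simps)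
  have "1 \<le> K ^ n / K ^ m" using Km Kmp by simp
  then have le: "1 / (1 + K ^ n) \<le> (K ^ n / K ^ m) / (1 + K ^ n)"
    using Knp by (intro divide_right_mono) auto
  show ?thesis using eq le e by linarith
qed

theorem lemma2:
  fixes V :: "'v set" and F :: "'j set" and N :: "'j \<Rightarrow> 'v set"
    and g :: "'j \<Rightarrow> ('v \<Rightarrow> nat) \<Rightarrow> bool" and q :: "'v \<Rightarrow> real"
    and xstar :: "'v \<Rightarrow> nat"
  assumes "finite V" and "finite F"
    and "\<forall>J\<in>F. N J \<noteq> {} \<and> N J \<subseteq> V"
    and "\<forall>v\<in>V. Jv F N v \<noteq> {}"
    and "\<forall>v\<in>V. xstar v \<in> {0, 1}"
    and "\<forall>J\<in>F. g J (restrict xstar (N J))"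
    and "\<forall>v\<in>V. xstar v = 0 \<longrightarrow> 1 - eps F N g v < q v \<and> q v \<le> 1"
    and "\<forall>v\<in>V. xstar v = 1 \<longrightarrow> 0 \<le> q v \<and> q v < eps F N g v"
  shows "\<forall>v\<in>V. \<forall>J\<in>Jv F N v.
           bp_v2f F N g q 1 v J (xstar v) > bp_v2f F N g q 1 v J (1 - xstar v)"
proof -
  note A = assms
  have finJv: "finite (Jv F N v)" for v unfolding Jv_def using A(2) by (rule finite_subset[rotated]) blast
  have finN: "finite (N J)" if "J \<in> F" for J
  proof -
    have "N J \<subseteq> V" using A(3) that by blast
    then show ?thesis using A(1) by (rule finite_subset)
  qed
  have kge: "card {x\<in>loc_configs (N J). g J x} \<le> kappa F N g v" if "J \<in> Jv F N v" for v J
  proof -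
    have fi: "finite ((\<lambda>J. card {x \<in> loc_configs (N J). g J x}) ` Jv F N v)"
      using finJv[of v] by (rule finite_imageI)
    have mem: "card {x\<in>loc_configs (N J). g J x} \<in> (\<lambda>J. card {x \<in> loc_configs (N J). g J x}) ` Jv F N v"
      using that by (rule imageI)
    show ?thesis unfolding kappa_def using Max_ge[OF fi mem] .
  qed
  have rin: "restrict xstar (N J) \<in> {x\<in>loc_configs (N J). g J x}" if "J \<in> F" for J
  proof -
    have sub: "N J \<subseteq> V" using that A(3) by blast
    have "restrict xstar (N J) \<in> PiE (N J) (\<lambda>_. {0,1})"
      unfolding PiE_iff using sub A(5) by auto
    moreover have "g J (restrict xstar (N J))" using that A(6) by blast
    ultimately show ?thesis unfolding loc_configs_def by simp
  qed
  have k1: "1 \<le> kappa F N g v" if "v \<in> V" for v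
  proof -
    have ne: "Jv F N v \<noteq> {}" using A(4) that by simp
    then obtain J where J: "J \<in> Jv F N v" by blast
    have JF: "J \<in> F" using J unfolding Jv_def by simp
    have "finite {x\<in>loc_configs (N J). g J x}" using lc_finite[OF finN[OF JF]] by simp
    moreover have "{x\<in>loc_configs (N J). g J x} \<noteq> {}" using rin[OF JF] by blast
    ultimately have "0 < card {x\<in>loc_configs (N J). g J x}" using card_gt_0_iff by blast
    then have "1 \<le> card {x\<in>loc_configs (N J). g J x}" by simp
    then show ?thesis using kge[OF J] by simp
  qed
  have e2: "eps F N g v \<le> 1/2" if "v \<in> V" for v
  proof -
    have "1 \<le> real (kappa F N g v)" using k1[OF that] by simp
    then have "1 \<le> real (kappa F N g v) ^ card (Jv F N v)" by simp
    then show ?thesis unfolding eps_def by (simp add: field_simps)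
  qed
  have pr: "prior q u (xstar u) > 1 - eps F N g u \<and> prior q u (1 - xstar u) < eps F N g u
       \<and> 0 \<le> prior q u (1 - xstar u)" if "u \<in> V" for u
    using A(5) A(7) A(8) that unfolding prior_def by auto
  have nn: "\<forall>x\<in>{0,1}. 0 \<le> prior q u x \<and> prior q u x \<le> prior q u (xstar u)"
     and ps: "0 < prior q u (xstar u)" if "u \<in> V" for u
  proof -
    have "xstar u \<in> {0,1}" using A(5) that by simp
    then have "{0,1} = {xstar u, 1 - xstar u}" by auto
    then show "\<forall>x\<in>{0,1}. 0 \<le> prior q u x \<and> prior q u x \<le> prior q u (xstar u)"
      using pr[OF that] e2[OF that] by auto
    show "0 < prior q u (xstar u)" using pr[OF that] e2[OF that] by auto
  qed
  show ?thesis
  proof (intro ballI)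
    fix v J assume vV: "v \<in> V" and J: "J \<in> Jv F N v"
    define mf where "mf = msg_f2v N g (\<lambda>u J. prior q u)"
    define f where "f x = prior q v x * (\<Prod>I\<in>Jv F N v - {J}. mf I v x)" for x
    define K where "K = real (kappa F N g v)"
    define e where "e = eps F N g v"
    define xs where "xs = xstar v"
    have xsv: "xs \<in> {0,1}" using A(5) vV xs_def by simp
    have bp: "bp_v2f F N g q 1 v J x = f x / (f 0 + f 1)" for x
      unfolding f_def mf_def by (simp add: msg_v2f_def normalize2_def)
    have K1: "1 \<le> K" using k1[OF vV] K_def by simp
    have mfb: "1 / K \<le> mf I v xs \<and> 0 \<le> mf I v (1 - xs) \<and> mf I v (1 - xs) \<le> 1"
      if I: "I \<in> Jv F N v" for I
    proof -
      have IF: "I \<in> F" and vI: "v \<in> N I" using I unfolding Jv_def by auto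
      have sub: "N I \<subseteq> V" using A(3) IF by auto
      have h1: "\<forall>u\<in>N I. xstar u \<in> {0,1}" using sub A(5) by blast
      have h2: "\<forall>u\<in>N I. \<forall>x\<in>{0,1}. 0 \<le> prior q u x \<and> prior q u x \<le> prior q u (xstar u)"
        using sub nn by blast
      have h3: "\<forall>u\<in>N I. 0 < prior q u (xstar u)" using sub ps by blast
      show ?thesis unfolding mf_def K_def xs_def
        by (rule f2v_bound[where N=N and I=I and g=g and xstar=xstar and q=q and v=v, OF finN[OF IF] vI A(6)[rule_format, OF IF] h1 h2 h3 kge[OF I]])
    qed
    define m where "m = card (Jv F N v - {J})"
    have mn: "m \<le> card (Jv F N v)" unfolding m_def using finJv by (simp add: card_Diff1_le)
    have c: "(1 / K) ^ m \<le> (\<Prod>I\<in>Jv F N v - {J}. mf I v xs)"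
    proof -
      have "(\<Prod>I\<in>Jv F N v - {J}. 1 / K) \<le> (\<Prod>I\<in>Jv F N v - {J}. mf I v xs)"
        using mfb K1 by (intro prod_mono) auto
      then show ?thesis unfolding m_def by simp
    qed
    have cpos: "0 < (1 / K) ^ m" using K1 by simp
    have p1: "(\<Prod>I\<in>Jv F N v - {J}. mf I v (1 - xs)) \<le> 1"
      using mfb by (intro prod_le_1) auto
    have p0: "0 \<le> (\<Prod>I\<in>Jv F N v - {J}. mf I v (1 - xs))"
      using mfb by (intro prod_nonneg) auto
    have prv: "prior q v xs > 1 - e" "prior q v (1 - xs) < e" "0 \<le> prior q v (1 - xs)"
      using pr[OF vV] unfolding e_def xs_def by auto
    have key: "e \<le> (1 - e) * (1 / K) ^ m"
      by (rule key_ineq[OF K1 mn]) (simp add: e_def eps_def K_def)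
    have f1: "f (1 - xs) < e"
    proof -
      have "f (1 - xs) \<le> prior q v (1 - xs) * 1"
        unfolding f_def using p1 prv(3) by (intro mult_left_mono) auto
      then show ?thesis using prv(2) by simp
    qed
    have f0: "0 \<le> f (1 - xs)" unfolding f_def using p0 prv(3) by simp
    have fx: "(1 - e) * (1 / K) ^ m < f xs"
    proof -
      have "(1 - e) * (1 / K) ^ m < prior q v xs * (1 / K) ^ m"
        using prv(1) cpos by (intro mult_strict_right_mono) auto
      also have "\<dots> \<le> f xs" unfolding f_def
        using c prv(1) e2[OF vV] unfolding e_def by (intro mult_left_mono) auto
      finally show ?thesis .
    qed
    have lt: "f (1 - xs) < f xs" using f1 fx key by simp
    have D: "0 < f 0 + f 1" using lt f0 xsv by (cases "xs = 0") auto
    have "f (1 - xs) / (f 0 + f 1) < f xs / (f 0 + f 1)"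
      using lt D by (simp add: divide_strict_right_mono)
    then show "bp_v2f F N g q 1 v J (xstar v) > bp_v2f F N g q 1 v J (1 - xstar v)"
      unfolding bp xs_def .
  qed
qed

end
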